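(* Let $v_1,v_2$ be two adjacent vertices of $\mathscr{BG}_+(n)$ with associated collections $\mathscr{D}_1,\mathscr{D}_2$ such that $\bigcap\mathscr{D}_1=\{i\}$ and $\bigcap\mathscr{D}_2=\{j\}$. Let $v=\lambda v_1+(1-\lambda)v_2$ with $\lambda\in\,]0,1[$. Then: (1) if $i=j$, the core $C(v)$ is a singleton; (2) if $i\neq j$ and $n\leqslant 4$, the core $C(v)$ is a singleton.
   Context: $N=\{1,\ldots,n\}$; a game is a map $v:2^N\to\mathbb{R}$ with $v(\varnothing)=0$. The core is $C(v)=\{x\in\mathbb{R}^N:\sum_{i\in S}x_i\geqslant v(S)\ \forall S,\ \sum_{i\in N}x_i=v(N)\}$. $\mathscr{BG}_+(n)$ is the polytope (in $\mathbb{R}^{2^N\setminus\{\varnothing,N\}}$) of games with $v\geqslant0$, $v(N)=1$ and $C(v)\neq\varnothing$. The collection associated to a vertex $v$ is $\mathscr{D}=\{S:\varnothing\neq S\subsetneq N,\ v(S)=1\}$; $\bigcap\mathscr{D}$ is the intersection of its members. Two vertices are adjacent if they lie on a common edge of the polytope. *)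

theory Defs
  imports "HOL-Analysis.Analysis"
begin

text \<open>Players: the finite type 'n, N = UNIV. A game is a vector indexed by all
coalitions; the coordinates of the empty set and of N are fixed (0 and 1) on the
polytope, so the polytope is an injective affine image of the one in the paper.\<close>

type_synonym 'n game = "real ^ ('n set)"

definition core :: "('n::finite) game \<Rightarrow> ('n \<Rightarrow> real) set" where
  "core v = {x. (\<forall>S. sum x S \<ge> v $ S) \<and> sum x UNIV = v $ UNIV}"

definition BGplus :: "('n::finite) game set" where
  "BGplus = {v. v $ {} = 0 \<and> v $ UNIV = 1 \<and> (\<forall>S. v $ S \<ge> 0) \<and> core v \<noteq> {}}"

definition is_vertex :: "('n::finite) game \<Rightarrow> bool" where
  "is_vertex v \<longleftrightarrow> v extreme_point_of BGplus"

definition adjacent :: "('n::finite) game \<Rightarrow> ('n::finite) game \<Rightarrow> bool" where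
  "adjacent v1 v2 \<longleftrightarrow> is_vertex v1 \<and> is_vertex v2 \<and> v1 \<noteq> v2 \<and>
     (\<exists>F. F face_of BGplus \<and> aff_dim F = 1 \<and> v1 \<in> F \<and> v2 \<in> F)"

definition collection :: "('n::finite) game \<Rightarrow> 'n set set" where
  "collection v = {S. S \<noteq> {} \<and> S \<noteq> UNIV \<and> v $ S = 1}"

end

theory Submission
  imports Defs
begin

lemma core_nonneg:
  assumes "x \<in> core w" "\<forall>S. w $ S \<ge> 0"
  shows "x k \<ge> 0"
proof -
  have "sum x {k} \<ge> w $ {k}" using assms(1) unfolding core_def by blast
  then show ?thesis using assms(2) by (metis order_trans sum.empty sum.insert finite.emptyI empty_iff add.right_neutral)
qed

lemma core_sum_nonneg:
  assumes "x \<in> core w" "\<forall>S. w $ S \<ge> 0"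
  shows "sum x S \<ge> 0"
  using core_nonneg[OF assms] by (simp add: sum_nonneg)

lemma BG_le1:
  assumes "w \<in> BGplus" shows "w $ S \<le> 1"
proof -
  obtain x where x: "x \<in> core w" and w: "\<forall>S. w $ S \<ge> 0" "w $ UNIV = 1"
    using assms unfolding BGplus_def by auto
  have "w $ S \<le> sum x S" using x by (simp add: core_def)
  also have "\<dots> \<le> sum x UNIV"
    by (rule sum_mono2) (auto intro: core_nonneg[OF x w(1)])
  also have "\<dots> = 1" using x w by (simp add: core_def)
  finally show ?thesis .
qed

lemma split_game:
  fixes w :: "('n::finite) game"
  assumes w0: "w $ {} = 0" and w1: "w $ UNIV = 1" and wn: "\<forall>S. w $ S \<ge> 0"
    and x: "x \<in> core w" and xk: "0 < x k"
  defines "A \<equiv> (\<chi> S. if k \<in> S then w $ S / sum x S else 0)"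
  shows "\<exists>B t. A \<in> BGplus \<and> B \<in> BGplus \<and> 0 < t \<and> t < 1 \<and> w = t *\<^sub>R A + (1 - t) *\<^sub>R B"
proof -
  have xn: "\<And>l. x l \<ge> 0" using core_nonneg[OF x wn] .
  have xS: "\<And>S. sum x S \<ge> 0" using core_sum_nonneg[OF x wn] .
  have wx: "\<And>S. w $ S \<le> sum x S" using x by (simp add: core_def)
  have xU: "sum x UNIV = 1" using x w1 by (simp add: core_def)
  have xkS: "\<And>S. k \<in> S \<Longrightarrow> x k \<le> sum x S"
    using xn by (simp add: member_le_sum)
  have xk1: "x k \<le> 1" using xkS[of UNIV] xU by simp
  define t where "t = x k / 2"
  have t0: "0 < t" and t1: "t < 1" using xk xk1 by (auto simp: t_def)
  have tS: "\<And>S. k \<in> S \<Longrightarrow> t < sum x S" using xkS xk by (fastforce simp: t_def)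
  have Ale: "\<And>S. w $ S / sum x S \<le> 1"
  proof -
    fix S
    show "w $ S / sum x S \<le> 1"
    proof (cases "sum x S = 0")
      case False then have "sum x S > 0" using xS[of S] by simp
      then show ?thesis using wx[of S] by simp
    qed simp
  qed
  have Anonneg: "\<And>S. A $ S \<ge> 0" using wn xS by (simp add: A_def)
  have A: "A \<in> BGplus"
  proof -
    define e where "e = (\<lambda>l::'n. if l = k then (1::real) else 0)"
    have es: "\<And>S. sum e S = (if k \<in> S then 1 else 0)" by (simp add: e_def)
    have "e \<in> core A" unfolding core_def using Ale by (auto simp: es A_def xU w1)
    then show ?thesis unfolding BGplus_def using Anonneg by (auto simp: A_def xU w1)
  qed
  define B :: "('n) game" where "B = (\<chi> S. (w $ S - t * A $ S) / (1 - t))"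
  have key: "\<And>S. t * A $ S \<le> w $ S"
  proof -
    fix S
    show "t * A $ S \<le> w $ S"
    proof (cases "k \<in> S")
      case True
      then have p: "sum x S > 0" using tS[of S] t0 by simp
      have "t * (w $ S / sum x S) \<le> sum x S * (w $ S / sum x S)"
        using tS[OF True] wn p by (intro mult_right_mono) auto
      also have "\<dots> = w $ S" using p by simp
      finally show ?thesis using True by (simp add: A_def)
    qed (simp add: A_def wn)
  qed
  have B: "B \<in> BGplus"
  proof -
    define y where "y = (\<lambda>l. (x l - (if l = k then t else 0)) / (1 - t))"
    have ys: "\<And>S. sum y S = (sum x S - (if k \<in> S then t else 0)) / (1 - t)"
      by (simp add: y_def sum_divide_distrib[symmetric] sum_subtractf)
    have "\<And>S. (w $ S - t * A $ S) \<le> sum x S - (if k \<in> S then t else 0)"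
    proof -
      fix S
      show "(w $ S - t * A $ S) \<le> sum x S - (if k \<in> S then t else 0)"
      proof (cases "k \<in> S")
        case True
        then have p: "sum x S > 0" using tS[of S] t0 by simp
        have "(w $ S - t * A $ S) = (w $ S / sum x S) * (sum x S - t)"
          using p True by (simp add: A_def field_simps)
        also have "\<dots> \<le> 1 * (sum x S - t)"
          using Ale tS[OF True] by (intro mult_right_mono) auto
        finally show ?thesis using True by simp
      qed (simp add: A_def wx)
    qed
    then have "y \<in> core B" unfolding core_def using t1
      by (auto simp: ys B_def xU w1 A_def divide_right_mono)
    moreover have "\<forall>S. B $ S \<ge> 0" using key t1 by (simp add: B_def)
    ultimately show ?thesis unfolding BGplus_def using t1 by (auto simp: B_def A_def xU w1 w0)
  qed
  have "w = t *\<^sub>R A + (1 - t) *\<^sub>R B"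
    using t1 by (simp add: vec_eq_iff B_def)
  then show ?thesis using A B t0 t1 by blast
qed

lemma vanish:
  fixes v1 v2 w :: "('n::finite) game"
  assumes F: "F face_of BGplus" "aff_dim F = 1" "v1 \<in> F" "v2 \<in> F" "v1 \<noteq> v2"
    and wF: "w \<in> F" and w0: "w $ {} = 0" and w1: "w $ UNIV = 1" and wn: "\<forall>S. w $ S \<ge> 0"
    and x: "x \<in> core w"
    and S1: "v1 $ S1 = 1" "k \<notin> S1" and S2: "v2 $ S2 = 1" "k \<notin> S2"
  shows "x k = 0"
proof (rule ccontr)
  assume "x k \<noteq> 0"
  then have xk: "x k > 0" using core_nonneg[OF x wn, of k] by simp
  define A :: "'n game" where "A = (\<chi> S. if k \<in> S then w $ S / sum x S else 0)"
  obtain B t where AB: "A \<in> BGplus" "B \<in> BGplus" "0 < t" "t < 1" "w = t *\<^sub>R A + (1 - t) *\<^sub>R B"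
    using split_game[OF w0 w1 wn x xk] unfolding A_def by blast
  have "A \<in> F"
  proof (cases "A = B")
    case True
    then have "w = A" using AB(5) by (simp add: algebra_simps)
    then show ?thesis using wF by simp
  next
    case False
    have "w \<in> open_segment B A"
      unfolding in_segment using False AB by (intro conjI exI[of _ t]) (auto simp: algebra_simps)
    then show ?thesis using face_ofD[OF F(1) _ AB(2) AB(1) wF] by blast
  qed
  have "collinear F" using F(2) by (simp add: collinear_aff_dim)
  then have "collinear {v1, v2, A}" by (rule collinear_subset) (use F \<open>A \<in> F\<close> in auto)
  then have "A \<in> affine hull {v1, v2}" using collinear_3_affine_hull F(5) by blast
  then obtain u u' where uu: "A = u *\<^sub>R v1 + u' *\<^sub>R v2" "u + u' = 1"
    by (auto simp: affine_hull_2)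
  have B12: "v1 \<in> BGplus" "v2 \<in> BGplus" using F(1,3,4) face_of_imp_subset by blast+
  have a1: "v2 $ S1 \<le> 1" "v2 $ S1 \<ge> 0" "v1 $ S2 \<le> 1" "v1 $ S2 \<ge> 0"
    using BG_le1[OF B12(2)] BG_le1[OF B12(1)] B12 unfolding BGplus_def by blast+
  have e1: "u + u' * v2 $ S1 = 0" using arg_cong[OF uu(1), of "\<lambda>z. z $ S1"] S1
    by (simp add: A_def)
  have e2: "u * v1 $ S2 + u' = 0" using arg_cong[OF uu(1), of "\<lambda>z. z $ S2"] S2
    by (simp add: A_def)
  define a where "a = v2 $ S1"
  define b where "b = v1 $ S2"
  have u': "u' = 1 - u" using uu(2) by simp
  have h2: "u * (1 - b) = 1" using e2 u' unfolding b_def by (simp add: algebra_simps)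
  have b01: "0 \<le> 1 - b" "1 - b \<le> 1" using a1 unfolding b_def by auto
  have u1: "u \<ge> 1"
  proof (rule ccontr)
    assume "\<not> u \<ge> 1"
    then have "u < 1" by simp
    show False
    proof (cases "u \<le> 0")
      case True
      then have "u * (1 - b) \<le> 0" using b01 by (simp add: mult_nonpos_nonneg)
      then show False using h2 by simp
    next
      case False
      then have "u * (1 - b) \<le> u" using b01 by (simp add: mult_left_le)
      then show False using h2 \<open>u < 1\<close> by simp
    qed
  qed
  have a01: "0 \<le> 1 - a" using a1 unfolding a_def by auto
  have "1 * (1 - a) \<le> u * (1 - a)" using u1 a01 by (rule mult_right_mono)
  moreover have "u * (1 - a) + a = 0" using e1 u' unfolding a_def by (simp add: algebra_simps)
  ultimately show False by simp
qed


lemma sum_supp1: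
  fixes x :: "'n::finite \<Rightarrow> real"
  assumes "\<forall>l. l \<noteq> i \<and> l \<notin> T \<longrightarrow> x l = 0" "i \<in> S" "S \<inter> T = {}"
  shows "sum x S = x i"
proof -
  have "sum x S = (\<Sum>l\<in>S. if l = i then x i else 0)"
    by (rule sum.cong) (use assms in auto)
  then show ?thesis using assms(2) by simp
qed

theorem theorem20:
  fixes v1 v2 :: "('n::finite) game" and i j :: 'n and lam :: real
  assumes "adjacent v1 v2"
    and "\<Inter> (collection v1) = {i}"
    and "\<Inter> (collection v2) = {j}"
    and "0 < lam" and "lam < 1"
  shows "(i = j \<longrightarrow> (\<exists>x. core (lam *\<^sub>R v1 + (1 - lam) *\<^sub>R v2) = {x}))
       \<and> (i \<noteq> j \<and> CARD('n) \<le> 4 \<longrightarrow> (\<exists>x. core (lam *\<^sub>R v1 + (1 - lam) *\<^sub>R v2) = {x}))"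
proof -
  define v where "v = lam *\<^sub>R v1 + (1 - lam) *\<^sub>R v2"
  obtain F where F: "F face_of BGplus" "aff_dim F = 1" "v1 \<in> F" "v2 \<in> F" and ne: "v1 \<noteq> v2"
    using assms(1) unfolding adjacent_def by blast
  have vF: "v \<in> F" unfolding v_def
    using face_of_imp_convex[OF F(1)] F(3,4) assms(4,5) by (simp add: convex_def)
  have "v \<in> BGplus" using vF face_of_imp_subset[OF F(1)] by blast
  then have v0: "v $ {} = 0" and v1: "v $ UNIV = 1" and vn: "\<forall>S. v $ S \<ge> 0"
    and cne: "core v \<noteq> {}" unfolding BGplus_def by auto
  have v1B: "v1 \<in> BGplus" "v2 \<in> BGplus" using F(3,4) face_of_imp_subset[OF F(1)] by blast+
  have c1: "\<And>S. S \<in> collection v1 \<Longrightarrow> i \<in> S" using assms(2) by blast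
  have c2: "\<And>S. S \<in> collection v2 \<Longrightarrow> j \<in> S" using assms(3) by blast
  have d1: "\<And>k. k \<noteq> i \<Longrightarrow> \<exists>S. v1 $ S = 1 \<and> k \<notin> S \<and> i \<in> S \<and> S \<in> collection v1"
    using assms(2) c1 unfolding collection_def by blast
  have d2: "\<And>k. k \<noteq> j \<Longrightarrow> \<exists>S. v2 $ S = 1 \<and> k \<notin> S \<and> j \<in> S \<and> S \<in> collection v2"
    using assms(3) c2 unfolding collection_def by blast
  have supp: "\<And>x k. x \<in> core v \<Longrightarrow> k \<noteq> i \<Longrightarrow> k \<noteq> j \<Longrightarrow> x k = 0"
  proof -
    fix x k assume x: "x \<in> core v" and k: "k \<noteq> i" "k \<noteq> j"
    obtain S1 where S1: "v1 $ S1 = 1" "k \<notin> S1" using d1[OF k(1)] by blast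
    obtain S2 where S2: "v2 $ S2 = 1" "k \<notin> S2" using d2[OF k(2)] by blast
    show "x k = 0" by (rule vanish[OF F ne vF v0 v1 vn x S1 S2])
  qed
  have xU: "\<And>x. x \<in> core v \<Longrightarrow> sum x UNIV = 1" using v1 by (simp add: core_def)
  have xS: "\<And>x S. x \<in> core v \<Longrightarrow> v $ S \<le> sum x S" by (simp add: core_def)
  have single: "\<exists>x. core v = {x}" if "\<And>x. x \<in> core v \<Longrightarrow> x = e" for e
    using that cne by blast
  have part1: "\<exists>x. core v = {x}" if ij: "i = j"
  proof (rule single)
    fix x assume x: "x \<in> core v"
    have "sum x UNIV = x i"
      by (rule sum_supp1[where T="{}"]) (use supp[OF x] ij in auto)
    then have "x i = 1" using xU[OF x] by simp
    then show "x = (\<lambda>l. if l = i then 1 else 0)" using supp[OF x] ij by auto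
  qed
  have part2: "\<exists>x. core v = {x}" if ij: "i \<noteq> j"
  proof (rule single)
    fix x assume x: "x \<in> core v"
    obtain S1 where S1: "v1 $ S1 = 1" "j \<notin> S1" "i \<in> S1" using d1 ij by metis
    obtain S2 where S2: "v2 $ S2 = 1" "i \<notin> S2" "j \<in> S2" using d2 ij by metis
    have a: "sum x S1 = x i"
      by (rule sum_supp1[where T="{j}"]) (use supp[OF x] S1 in auto)
    have b: "sum x S2 = x j"
      by (rule sum_supp1[where T="{i}"]) (use supp[OF x] S2 in auto)
    have "v $ S1 \<ge> lam" using S1 vn v1B assms(5) unfolding v_def BGplus_def by auto
    then have xi: "x i \<ge> lam" using xS[OF x, of S1] a by simp
    have "v $ S2 \<ge> 1 - lam" using S2 v1B assms(4) unfolding v_def BGplus_def by auto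
    then have xj: "x j \<ge> 1 - lam" using xS[OF x, of S2] b by simp
    have eq: "\<And>l. x l = (if l = i then x i else 0) + (if l = j then x j else 0)"
      using supp[OF x] ij by auto
    have "sum x UNIV = (\<Sum>l\<in>UNIV. (if l = i then x i else 0) + (if l = j then x j else 0))"
      by (rule sum.cong[OF refl eq])
    also have "\<dots> = x i + x j" by (simp add: sum.distrib)
    finally have "sum x UNIV = x i + x j" .
    then have "x i + x j = 1" using xU[OF x] by simp
    then have "x i = lam" "x j = 1 - lam" using xi xj by auto
    then show "x = (\<lambda>l. if l = i then lam else if l = j then 1 - lam else 0)"
      using supp[OF x] ij by auto
  qed
  show ?thesis using part1 part2 unfolding v_def by blast
qed

end
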